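(* Let $\mathcal{E}\in(0,1)$. If $u\in L^\infty(\mathbb{R})\cap H^2_{\rm loc}(\mathbb{R})$ satisfies $L_+u=0$, then $u=Cu_0'$ for some constant $C$. Moreover, there exists a unique odd $2T_0$-periodic function $U\in H^2_{\rm per}(0,2T_0)$ such that $L_+U=u_0$.
   Context: For $\mathcal{E}\in(0,1)$, $u_0(x)=\sqrt{1-\mathcal{E}}\,\mathrm{sn}\big(x\sqrt{(1+\mathcal{E})/2},\,k\big)$ with $k=\sqrt{(1-\mathcal{E})/(1+\mathcal{E})}$ (Jacobi elliptic function of modulus $k$); it satisfies $u_0''+(1-u_0^2)u_0=0$ and has minimal period $2T_0=4\sqrt{2/(1+\mathcal{E})}\,K(k)$. $L_+u=-u''+(3u_0^2-1)u$. *)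

theory Defs
  imports "HOL-Analysis.Analysis"
begin

text \<open>Incomplete elliptic integral of the first kind (signed, so defined for all real phi).\<close>
definition ellF :: "real \<Rightarrow> real \<Rightarrow> real" where
  "ellF phi k = (LBINT t=0..phi. 1 / sqrt (1 - k^2 * (sin t)^2))"

definition ellK :: "real \<Rightarrow> real" where
  "ellK k = ellF (pi/2) k"

definition jam :: "real \<Rightarrow> real \<Rightarrow> real" where
  "jam x k = (THE phi. ellF phi k = x)"

definition jsn :: "real \<Rightarrow> real \<Rightarrow> real" where
  "jsn x k = sin (jam x k)"

definition modk :: "real \<Rightarrow> real" where
  "modk E = sqrt ((1 - E) / (1 + E))"

definition u0 :: "real \<Rightarrow> real \<Rightarrow> real" where
  "u0 E x = sqrt (1 - E) * jsn (x * sqrt ((1 + E) / 2)) (modk E)"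

text \<open>Half period T0, so the minimal period is 2 T0.\<close>
definition T0 :: "real \<Rightarrow> real" where
  "T0 E = 2 * sqrt (2 / (1 + E)) * ellK (modk E)"

text \<open>u is in H^2_loc(R) with second weak derivative w: u is differentiable everywhere
  (continuous representative), its derivative is absolutely continuous with derivative w,
  and w is square integrable on every compact interval.\<close>
definition H2loc_with :: "(real \<Rightarrow> real) \<Rightarrow> (real \<Rightarrow> real) \<Rightarrow> bool" where
  "H2loc_with u w \<longleftrightarrow> (\<exists>u'. (\<forall>x. (u has_real_derivative u' x) (at x)) \<and>
      (\<forall>a b. a \<le> b \<longrightarrow> (w has_integral (u' b - u' a)) {a..b}
                      \<and> (\<lambda>t. (w t)^2) integrable_on {a..b}))"

definition Lplus_eq :: "real \<Rightarrow> (real \<Rightarrow> real) \<Rightarrow> (real \<Rightarrow> real) \<Rightarrow> bool" where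
  "Lplus_eq E u f \<longleftrightarrow> (\<exists>w. H2loc_with u w \<and>
      (AE x in lborel. - w x + (3 * (u0 E x)^2 - 1) * u x = f x))"

end

theory Submission
  imports Defs
begin


definition ef :: "real \<Rightarrow> real \<Rightarrow> real" where "ef k t = 1 / sqrt (1 - k^2 * (sin t)^2)"

lemma ef_pos_aux: fixes k t :: real assumes "k^2 < 1" shows "1 - k^2 * (sin t)^2 > 0"
proof -
  have "(sin t)^2 \<le> 1" using sin_cos_squared_add[of t] zero_le_power2[of "cos t"] by linarith
  hence "k^2 * (sin t)^2 \<le> k^2" by (simp add: mult_left_le)
  thus ?thesis using assms by linarith
qed

lemma ef_cont: assumes "k^2 < 1" shows "continuous_on S (ef k)"
  unfolding ef_def using ef_pos_aux[OF assms]
  by (intro continuous_intros) (auto simp: less_le)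

lemma LBINT_deriv: assumes "continuous_on UNIV s"
  shows "((\<lambda>p. LBINT t=0..p. s t) has_real_derivative s x) (at x)"
proof -
  let ?a = "min x 0 - 1" and ?b = "max x 0 + 1"
  have "((\<lambda>u. LBINT y=(ereal 0)..u. s y) has_vector_derivative (s x)) (at x within {?a..?b})"
    by (rule interval_integral_FTC2) (auto intro: continuous_on_subset[OF assms])
  hence "((\<lambda>u. LBINT y=(ereal 0)..u. s y) has_vector_derivative (s x)) (at x)"
    by (subst (asm) at_within_interior[of x]) auto
  thus ?thesis unfolding has_real_derivative_iff_has_vector_derivative
    by (simp add: zero_ereal_def)
qed

lemma MVT': fixes f :: "real \<Rightarrow> real"
  assumes "a < b" "\<And>x. (f has_real_derivative f' x) (at x)"
  shows "\<exists>z. a < z \<and> z < b \<and> f b - f a = (b - a) * f' z"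
proof -
  have c: "continuous_on {a..b} f"
    using assms(2) by (meson DERIV_continuous continuous_at_imp_continuous_on)
  obtain l z where "a < z" "z < b" "DERIV f z :> l" "f b - f a = (b - a) * l"
    using MVT[OF assms(1) c] assms(2) real_differentiable_def by blast
  moreover have "l = f' z" using DERIV_unique[OF \<open>DERIV f z :> l\<close> assms(2)] .
  ultimately show ?thesis by blast
qed

context fixes k :: real assumes k2: "k^2 < 1"
begin

lemma ef_ge1: "ef k t \<ge> 1"
proof -
  have p: "1 - k^2 * (sin t)^2 > 0" by (rule ef_pos_aux[OF k2])
  have "k^2 * (sin t)^2 \<ge> 0" by simp
  hence "1 - k^2 * (sin t)^2 \<le> 1" by linarith
  hence "sqrt (1 - k^2 * (sin t)^2) \<le> 1" by simp
  moreover have "sqrt (1 - k^2 * (sin t)^2) > 0" using p by simp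
  ultimately show ?thesis unfolding ef_def by (simp add: field_simps)
qed

lemma F_deriv: "((\<lambda>p. ellF p k) has_real_derivative ef k x) (at x)"
  unfolding ellF_def using LBINT_deriv[OF ef_cont[OF k2]] by (simp add: ef_def)

lemma F0: "ellF 0 k = 0" by (simp add: ellF_def zero_ereal_def)

lemma F_deriv_comp[derivative_intros]: "(h has_real_derivative h') (at x) \<Longrightarrow> D = ef k (h x) * h' \<Longrightarrow>
   ((\<lambda>x. ellF (h x) k) has_real_derivative D) (at x)"
  using DERIV_chain2[OF F_deriv] by blast

lemma F_odd: "ellF (-p) k = - ellF p k"
proof -
  have "\<forall>x. ((\<lambda>p. ellF p k + ellF (-p) k) has_real_derivative 0) (at x)"
  proof
    fix x
    have "((\<lambda>p. ellF p k + ellF (-p) k) has_real_derivative (ef k x + ef k (-x) * (-1))) (at x)"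
      by (intro derivative_eq_intros F_deriv_comp) auto
    thus "((\<lambda>p. ellF p k + ellF (-p) k) has_real_derivative 0) (at x)" by (simp add: ef_def)
  qed
  from DERIV_isconst_all[OF this, of p 0] show ?thesis by (simp add: F0)
qed

lemma F_shift: "ellF (p + pi) k = ellF p k + ellF pi k"
proof -
  have "\<forall>x. ((\<lambda>p. ellF (p + pi) k - ellF p k) has_real_derivative 0) (at x)"
  proof
    fix x
    have "((\<lambda>p. ellF (p + pi) k - ellF p k) has_real_derivative (ef k (x + pi) * 1 - ef k x)) (at x)"
      by (intro derivative_eq_intros F_deriv_comp) auto
    thus "((\<lambda>p. ellF (p + pi) k - ellF p k) has_real_derivative 0) (at x)" by (simp add: ef_def)
  qed
  from DERIV_isconst_all[OF this, of p 0] show ?thesis by (simp add: F0)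
qed

lemma F_pi: "ellF pi k = 2 * ellK k"
proof -
  have "\<forall>x. ((\<lambda>p. ellF p k + ellF (pi - p) k) has_real_derivative 0) (at x)"
  proof
    fix x
    have "((\<lambda>p. ellF p k + ellF (pi - p) k) has_real_derivative (ef k x + ef k (pi - x) * (0 - 1))) (at x)"
      by (intro derivative_eq_intros F_deriv_comp) auto
    thus "((\<lambda>p. ellF p k + ellF (pi - p) k) has_real_derivative 0) (at x)" by (simp add: ef_def)
  qed
  from DERIV_isconst_all[OF this, of "pi/2" 0] show ?thesis by (simp add: F0 ellK_def)
qed

lemma F_strict: "a < b \<Longrightarrow> ellF a k < ellF b k"
proof (rule DERIV_pos_imp_increasing[of a b "\<lambda>p. ellF p k"])
  fix x
  have "ef k x > 0" using ef_ge1[of x] by linarith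
  thus "\<exists>y. ((\<lambda>p. ellF p k) has_real_derivative y) (at x) \<and> 0 < y" using F_deriv by blast
qed

lemma F_inj: "ellF a k = ellF b k \<Longrightarrow> a = b"
  by (metis F_strict less_irrefl linorder_neqE_linordered_idom)

lemma F_ge: "0 \<le> p \<Longrightarrow> p \<le> ellF p k"
proof -
  assume "0 \<le> p"
  have "(\<lambda>p. ellF p k - p) 0 \<le> (\<lambda>p. ellF p k - p) p"
    apply (rule DERIV_nonneg_imp_nondecreasing[OF \<open>0 \<le> p\<close>])
    apply (rule exI[of _ "ef k _ - 1"])
    using F_deriv ef_ge1 by (auto intro!: derivative_eq_intros)
  thus ?thesis by (simp add: F0)
qed

lemma F_cont: "isCont (\<lambda>p. ellF p k) x"
  using F_deriv DERIV_isCont by blast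

lemma F_surj: "\<exists>p. ellF p k = x"
proof (cases "x \<ge> 0")
  case True
  have "ellF 0 k \<le> x" "x \<le> ellF x k" using True F_ge by (auto simp: F0)
  thus ?thesis using IVT[of "\<lambda>p. ellF p k" 0 x x] True F_cont by blast
next
  case False
  have "ellF x k \<le> x" using F_ge[of "-x"] False by (simp add: F_odd)
  moreover have "x \<le> ellF 0 k" using False by (simp add: F0)
  ultimately show ?thesis using IVT[of "\<lambda>p. ellF p k" x x 0] False F_cont by auto
qed

lemma jam_F: "ellF (jam x k) k = x"
proof -
  obtain p where p: "ellF p k = x" using F_surj by blast
  have "ellF (THE p. ellF p k = x) k = x"
    by (rule theI[of _ p]) (use p F_inj in auto)
  thus ?thesis by (simp add: jam_def)
qed

lemma F_jam: "jam (ellF p k) k = p"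
  using jam_F F_inj by blast

lemma jam_cont: "isCont (\<lambda>x. jam x k) x"
proof -
  have "isCont (\<lambda>x. jam x k) (ellF (jam x k) k)"
    by (rule isCont_inverse_function[where d=1]) (auto simp: F_jam F_cont)
  thus ?thesis by (simp add: jam_F)
qed

definition dn :: "real \<Rightarrow> real" where "dn x = sqrt (1 - k^2 * (sin (jam x k))^2)"

lemma dn_pos: "dn x > 0" unfolding dn_def using ef_pos_aux[OF k2] by simp

lemma jam_deriv: "((\<lambda>x. jam x k) has_real_derivative dn x) (at x)"
proof -
  have "((\<lambda>x. jam x k) has_real_derivative inverse (ef k (jam x k))) (at x)"
    by (rule DERIV_inverse_function[where a="x-1" and b="x+1"])
       (use F_deriv ef_ge1[of "jam x k"] jam_F jam_cont in \<open>auto\<close>)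
  thus ?thesis by (simp add: ef_def dn_def)
qed

lemma jam0: "jam 0 k = 0" using F_jam[of 0] by (simp add: F0)

lemma jam_odd: "jam (-x) k = - jam x k"
  by (metis F_odd F_jam jam_F)

lemma jam_shift: "jam (x + 2 * ellK k) k = jam x k + pi"
proof -
  have "ellF (jam x k + pi) k = x + 2 * ellK k" by (simp add: F_shift F_pi jam_F)
  thus ?thesis by (metis F_jam)
qed

lemma ellK_pos: "ellK k > 0"
  using F_strict[of 0 "pi/2"] by (simp add: F0 ellK_def)

end


context fixes k :: real assumes k2: "k^2 < 1"
begin

lemma sn_deriv: "((\<lambda>x. sin (jam x k)) has_real_derivative cos (jam x k) * dn k x) (at x)"
  using DERIV_chain2[OF DERIV_sin jam_deriv[OF k2]] by simp

lemma cn_deriv: "((\<lambda>x. cos (jam x k)) has_real_derivative - sin (jam x k) * dn k x) (at x)"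
  using DERIV_chain2[OF DERIV_cos jam_deriv[OF k2]] by simp

lemma dn_deriv: "(dn k has_real_derivative (- (k^2) * sin (jam x k) * cos (jam x k))) (at x)"
proof -
  have p: "1 - k^2 * (sin (jam x k))^2 > 0" by (rule ef_pos_aux[OF k2])
  have d: "((\<lambda>x. 1 - k^2 * (sin (jam x k))^2) has_real_derivative
      - (k^2 * (2 * sin (jam x k) * (cos (jam x k) * dn k x)))) (at x)"
    by (rule derivative_eq_intros sn_deriv | simp)+
  have "((\<lambda>x. sqrt (1 - k^2 * (sin (jam x k))^2)) has_real_derivative
      inverse (sqrt (1 - k^2 * (sin (jam x k))^2)) / 2 * (- (k^2 * (2 * sin (jam x k) * (cos (jam x k) * dn k x))))) (at x)"
    using DERIV_chain2[OF DERIV_real_sqrt[OF p] d] by simp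
  moreover have "(\<lambda>x. sqrt (1 - k^2 * (sin (jam x k))^2)) = dn k" by (rule ext) (simp add: dn_def[OF k2])
  ultimately have "(dn k has_real_derivative
      inverse (dn k x) / 2 * (- (k^2 * (2 * sin (jam x k) * (cos (jam x k) * dn k x))))) (at x)"
    by (simp add: dn_def[OF k2])
  moreover have "inverse (dn k x) / 2 * (- (k^2 * (2 * sin (jam x k) * (cos (jam x k) * dn k x))))
      = - (k^2) * sin (jam x k) * cos (jam x k)" using dn_pos[OF k2, of x] by (simp add: field_simps)
  ultimately show ?thesis by (rule DERIV_cong)
qed

lemma cd_deriv: "((\<lambda>x. cos (jam x k) * dn k x) has_real_derivative
    (-(1 + k^2) * sin (jam x k) + 2 * k^2 * (sin (jam x k))^3)) (at x)"
proof -
  have a: "(dn k x)^2 = 1 - k^2 * (sin (jam x k))^2"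
    using ef_pos_aux[OF k2, of "jam x k"] by (simp add: dn_def[OF k2])
  have b: "(cos (jam x k))^2 = 1 - (sin (jam x k))^2" by (simp add: cos_squared_eq)
  show ?thesis
    apply (rule DERIV_cong[OF DERIV_mult[OF cn_deriv dn_deriv]])
    using a b by algebra
qed

end


lemma reg:
  fixes u u1 w h :: "real \<Rightarrow> real"
  assumes "\<And>a b. a \<le> b \<Longrightarrow> (w has_integral (u1 b - u1 a)) {a..b}"
    and ae: "AE x in lborel. w x = h x" and hc: "continuous_on UNIV h"
  shows "(u1 has_real_derivative h x) (at x)"
proof -
  let ?a = "x - 1" and ?b = "x + 1"
  have I: "integral {?a..y} h = u1 y - u1 ?a" if "?a \<le> y" for y
  proof -
    have "(w has_integral (u1 y - u1 ?a)) {?a..y}" using assms(1) that by blast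
    moreover have "AE t in lborel. t \<in> {?a..y} \<longrightarrow> w t = h t" using ae by eventually_elim auto
    ultimately have "(h has_integral (u1 y - u1 ?a)) {?a..y}" using has_integral_AE by blast
    thus ?thesis by (rule integral_unique)
  qed
  have "((\<lambda>y. integral {?a..y} h) has_real_derivative h x) (at x within {?a..?b})"
    by (rule integral_has_real_derivative) (auto intro: continuous_on_subset[OF hc])
  hence "((\<lambda>y. integral {?a..y} h) has_real_derivative h x) (at x)"
    by (subst (asm) at_within_interior[of x]) auto
  hence "((\<lambda>y. u1 ?a + integral {?a..y} h) has_real_derivative h x) (at x)"
    by (auto intro!: derivative_eq_intros)
  thus ?thesis
    by (rule has_field_derivative_transform_within_open[where S="{?a<..<?b}"]) (auto simp: I)
qed

lemma shift_deriv: "(f has_real_derivative f' (x + c)) (at (x + c)) \<Longrightarrow>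
   ((\<lambda>x. f (x + c)) has_real_derivative f' (x + c)) (at x)"
proof -
  assume a: "(f has_real_derivative f' (x + c)) (at (x + c))"
  have "((\<lambda>x. x + c) has_real_derivative 1) (at x)" by (intro derivative_eq_intros) auto
  from DERIV_chain2[OF a this] show ?thesis by simp
qed

definition LEq :: "(real\<Rightarrow>real) \<Rightarrow> (real\<Rightarrow>real) \<Rightarrow> (real\<Rightarrow>real) \<Rightarrow> bool" where
  "LEq f u v \<longleftrightarrow> (\<exists>w. H2loc_with u w \<and> (AE x in lborel. - w x + (3 * (f x)^2 - 1) * u x = v x))"

locale sol =
  fixes f g :: "real \<Rightarrow> real" and P :: real
  assumes df: "\<And>x. (f has_real_derivative g x) (at x)"
    and dg: "\<And>x. (g has_real_derivative (f x)^3 - f x) (at x)"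
    and fodd: "\<And>x. f (-x) = - f x"
    and fper: "\<And>x. f (x + P) = f x"
    and fsq: "\<And>x. (f x)^2 < 1"
    and g0: "g 0 \<noteq> 0" and g02: "(g 0)^2 \<noteq> 1/2"
    and Ppos: "P > 0"
begin

definition q where "q x = 3 * (f x)^2 - 1"

lemma f0: "f 0 = 0" using fodd[of 0] by simp

lemma fcont: "continuous_on S f"
  using df by (meson DERIV_continuous continuous_at_imp_continuous_on)
lemma gcont: "continuous_on S g"
  using dg by (meson DERIV_continuous continuous_at_imp_continuous_on)

lemma gper: "g (x + P) = g x"
proof -
  have "((\<lambda>x. f (x + P)) has_real_derivative g (x + P)) (at x)" by (rule shift_deriv[where f=f and f'=g and x=x and c=P, OF df])
  hence "(f has_real_derivative g (x + P)) (at x)" by (simp add: fper)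
  thus ?thesis using DERIV_unique[OF _ df] by blast
qed

lemma geven: "g (- x) = g x"
proof -
  have "((\<lambda>x. f (- x)) has_real_derivative g (- x) * (-1)) (at x)"
  proof -
    have "((\<lambda>x. -x) has_real_derivative -1) (at x)" by (intro derivative_eq_intros) auto
    from DERIV_chain2[OF df this] show ?thesis by simp
  qed
  hence "((\<lambda>x. - f x) has_real_derivative - g (- x)) (at x)" by (simp add: fodd)
  moreover have "((\<lambda>x. - f x) has_real_derivative - g x) (at x)" by (intro derivative_intros df)
  ultimately show ?thesis using DERIV_unique by fastforce
qed

lemma per_nat: "(\<And>x. F (x + P) = F x) \<Longrightarrow> F (real n * P) = F 0"
  by (induction n) (simp_all add: distrib_right, metis add.commute)

lemma energy: "(g x)^2 + (f x)^2 - (f x)^4 / 2 = (g 0)^2"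
proof -
  have "\<forall>x. ((\<lambda>x. (g x)^2 + (f x)^2 - (f x)^4 / 2) has_real_derivative 0) (at x)"
  proof
    fix x
    show "((\<lambda>x. (g x)^2 + (f x)^2 - (f x)^4 / 2) has_real_derivative 0) (at x)"
      by (rule derivative_eq_intros df dg refl | simp)+ (simp add: algebra_simps power2_eq_square power3_eq_cube power4_eq_xxxx)
  qed
  from DERIV_isconst_all[OF this, of x 0] show ?thesis by (simp add: f0)
qed

lemma q_bnd: "0 \<le> 1 + q x" "1 + q x \<le> 3"
  using fsq[of x] unfolding q_def by auto

lemma uniq:
  assumes d1: "\<And>x. (y has_real_derivative y1 x) (at x)"
    and d2: "\<And>x. (y1 has_real_derivative q x * y x) (at x)"
    and i: "y 0 = 0" "y1 0 = 0"
  shows "y x = 0"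
proof -
  define e where "e t = (y t)^2 + (y1 t)^2" for t
  have de: "(e has_real_derivative 2 * y t * y1 t * (1 + q t)) (at t)" for t
    unfolding e_def[abs_def]
    by (rule derivative_eq_intros d1 d2 refl | simp)+ (simp add: algebra_simps)
  have bnd: "\<bar>2 * y t * y1 t * (1 + q t)\<bar> \<le> 3 * e t" for t
  proof -
    have a: "\<bar>2 * y t * y1 t\<bar> \<le> e t"
    proof -
      have "0 \<le> (\<bar>y t\<bar> - \<bar>y1 t\<bar>)^2" by simp
      hence "2 * \<bar>y t\<bar> * \<bar>y1 t\<bar> \<le> \<bar>y t\<bar> * \<bar>y t\<bar> + \<bar>y1 t\<bar> * \<bar>y1 t\<bar>"
        by (simp add: power2_eq_square algebra_simps)
      thus ?thesis unfolding e_def by (simp add: abs_mult power2_eq_square)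
    qed
    have "\<bar>2 * y t * y1 t * (1 + q t)\<bar> = \<bar>2 * y t * y1 t\<bar> * (1 + q t)"
      using q_bnd(1)[of t] by (simp add: abs_mult)
    also have "\<dots> \<le> e t * 3"
      using a q_bnd[of t] by (intro mult_mono) (auto simp: e_def)
    finally show ?thesis by simp
  qed
  have e0: "e 0 = 0" unfolding e_def using i by simp
  have enn: "e t \<ge> 0" for t unfolding e_def by simp
  have "e x = 0"
  proof (cases "x \<ge> 0")
    case True
    have "(\<lambda>t. e t * exp (- 3 * t)) x \<le> (\<lambda>t. e t * exp (- 3 * t)) 0"
    proof (rule DERIV_nonpos_imp_nonincreasing[OF True])
      fix t
      have "((\<lambda>t. e t * exp (- 3 * t)) has_real_derivative
          2 * y t * y1 t * (1 + q t) * exp (- 3 * t) + e t * (exp (- 3 * t) * (- 3))) (at t)"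
        by (rule derivative_eq_intros de refl | simp)+
      moreover have "2 * y t * y1 t * (1 + q t) * exp (- 3 * t) + e t * (exp (- 3 * t) * (- 3)) \<le> 0"
      proof -
        have "2 * y t * y1 t * (1 + q t) \<le> 3 * e t" using bnd[of t] by linarith
        hence "2 * y t * y1 t * (1 + q t) * exp (- 3 * t) \<le> 3 * e t * exp (- 3 * t)"
          by (intro mult_right_mono) auto
        thus ?thesis by (simp add: algebra_simps)
      qed
      ultimately show "\<exists>y. ((\<lambda>t. e t * exp (- 3 * t)) has_real_derivative y) (at t) \<and> y \<le> 0" by blast
    qed
    hence "e x * exp (- 3 * x) \<le> 0" using e0 by simp
    thus ?thesis using enn[of x] by (simp add: mult_le_0_iff)
  next
    case False
    have "(\<lambda>t. e t * exp (3 * t)) x \<le> (\<lambda>t. e t * exp (3 * t)) 0"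
    proof (rule DERIV_nonneg_imp_nondecreasing[of x 0 "\<lambda>t. e t * exp (3 * t)"])
      show "x \<le> 0" using False by simp
      fix t
      have "((\<lambda>t. e t * exp (3 * t)) has_real_derivative
          2 * y t * y1 t * (1 + q t) * exp (3 * t) + e t * (exp (3 * t) * 3)) (at t)"
        by (rule derivative_eq_intros de refl | simp)+
      moreover have "2 * y t * y1 t * (1 + q t) * exp (3 * t) + e t * (exp (3 * t) * 3) \<ge> 0"
      proof -
        have "- (3 * e t) \<le> 2 * y t * y1 t * (1 + q t)" using bnd[of t] by linarith
        hence "- (3 * e t) * exp (3 * t) \<le> 2 * y t * y1 t * (1 + q t) * exp (3 * t)"
          by (intro mult_right_mono) auto
        thus ?thesis by (simp add: algebra_simps)
      qed
      ultimately show "\<exists>y. ((\<lambda>t. e t * exp (3 * t)) has_real_derivative y) (at t) \<and> y \<ge> 0" by blast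
    qed
    hence "e x * exp (3 * x) \<le> 0" using e0 by simp
    thus ?thesis using enn[of x] by (simp add: mult_le_0_iff)
  qed
  thus ?thesis unfolding e_def by (simp add: add_nonneg_eq_0_iff)
qed

end


context sol begin

definition s where "s t = (f t)^2 - 2 * (g 0)^2"
definition S :: "real \<Rightarrow> real" where "S x = (LBINT t=0..x. s t)"

lemma scont: "continuous_on UNIV s"
  unfolding s_def by (intro continuous_intros fcont)

lemma dS: "(S has_real_derivative s x) (at x)"
  unfolding S_def[abs_def] by (rule LBINT_deriv[OF scont])

lemma S0: "S 0 = 0" by (simp add: S_def zero_ereal_def)

lemma seven: "s (- x) = s x" unfolding s_def by (simp add: fodd)

lemma Sodd: "S (- x) = - S x"
proof -
  have "\<forall>x. ((\<lambda>x. S x + S (- x)) has_real_derivative 0) (at x)"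
  proof
    fix x
    have "((\<lambda>x. -x) has_real_derivative -1) (at x)" by (intro derivative_eq_intros) auto
    from DERIV_chain2[OF dS this] have "((\<lambda>x. S (- x)) has_real_derivative s (- x) * -1) (at x)" by simp
    from DERIV_add[OF dS this] show "((\<lambda>x. S x + S (- x)) has_real_derivative 0) (at x)"
      by (simp add: seven)
  qed
  from DERIV_isconst_all[OF this, of x 0] show ?thesis by (simp add: S0)
qed

lemma sper: "s (x + P) = s x" unfolding s_def by (simp add: fper)

lemma Sper: "S (x + P) = S x + S P"
proof -
  have "\<forall>x. ((\<lambda>x. S (x + P) - S x) has_real_derivative 0) (at x)"
  proof
    fix x
    have "((\<lambda>x. S (x + P)) has_real_derivative s (x + P)) (at x)"
      by (rule shift_deriv[where f=S and f'=s, OF dS])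
    from DERIV_diff[OF this dS] show "((\<lambda>x. S (x + P) - S x) has_real_derivative 0) (at x)"
      by (simp add: sper)
  qed
  from DERIV_isconst_all[OF this, of x 0] show ?thesis by (simp add: S0)
qed

definition AA where "AA = S P"

lemma AA_neg: "AA < 0"
proof -
  define T where "T x = S x + 2 * f x * g x" for x
  have dT: "(T has_real_derivative 3 * (f x)^2 * ((f x)^2 - 1)) (at x)" for x
  proof -
    have "(T has_real_derivative s x + 2 * (g x * g x + f x * ((f x)^3 - f x))) (at x)"
      unfolding T_def[abs_def]
      by (rule derivative_eq_intros dS df dg refl | simp add: algebra_simps)+
    moreover have "s x + 2 * (g x * g x + f x * ((f x)^3 - f x)) = 3 * (f x)^2 * ((f x)^2 - 1)"
      using energy[of x] unfolding s_def by algebra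
    ultimately show ?thesis by simp
  qed
  have dTn: "3 * (f x)^2 * ((f x)^2 - 1) \<le> 0" for x
    using fsq[of x] by (simp add: mult_nonneg_nonpos)
  have T0: "T 0 = 0" by (simp add: T_def S0 f0)
  have TP: "T P = AA" using fper[of 0] by (simp add: T_def AA_def f0)
  obtain d where d: "d > 0" "\<And>t. dist t 0 < d \<Longrightarrow> dist (g t) (g 0) < \<bar>g 0\<bar>"
    using gcont[of UNIV] g0 unfolding continuous_on_eq_continuous_at[OF open_UNIV] continuous_at_eps_delta
    by (metis UNIV_I zero_less_abs_iff)
  have gnz: "g t \<noteq> 0" if "\<bar>t\<bar> < d" for t
    using d(2)[of t] that by (auto simp: dist_real_def)
  define t1 where "t1 = min (d/2) (P/2)"
  have t1: "0 < t1" "t1 < d" "t1 < P" using d Ppos by (auto simp: t1_def)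
  obtain xi where xi: "0 < xi" "xi < t1" "T t1 - T 0 = (t1 - 0) * (3 * (f xi)^2 * ((f xi)^2 - 1))"
    using MVT'[OF t1(1) dT] by blast
  obtain eta where eta: "0 < eta" "eta < xi" "f xi - f 0 = (xi - 0) * g eta"
    using MVT'[OF xi(1) df] by blast
  have "f xi \<noteq> 0" using eta xi t1 gnz[of eta] f0 by auto
  hence "3 * (f xi)^2 * ((f xi)^2 - 1) < 0" using fsq[of xi] by (simp add: mult_pos_neg)
  hence "T t1 < 0" using xi t1 T0 by (simp add: mult_pos_neg)
  moreover have "T P \<le> T t1"
    apply (rule DERIV_nonpos_imp_nonincreasing[of t1 P T])
    using t1 apply simp
    using dT dTn by blast
  ultimately show ?thesis using TP by simp
qed

definition y2 where "y2 x = g x * S x + (2 - 2 * (g 0)^2) * f x - (f x)^3"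
definition z2 where "z2 x = ((f x)^3 - f x) * S x + g x * s x + (2 - 2 * (g 0)^2) * g x - 3 * (f x)^2 * g x"

lemma dcub: "((\<lambda>x. (f x)^3 - f x) has_real_derivative q x * g x) (at x)"
  unfolding q_def by (rule derivative_eq_intros df refl | simp add: algebra_simps)+

lemma dy2: "(y2 has_real_derivative z2 x) (at x)"
  unfolding y2_def[abs_def] z2_def
  by (rule derivative_eq_intros df dg dS refl | simp add: algebra_simps q_def)+

lemma ds: "(s has_real_derivative 2 * f x * g x) (at x)"
  unfolding s_def[abs_def] by (rule derivative_eq_intros df refl | simp)+

lemma dz2: "(z2 has_real_derivative q x * y2 x) (at x)"
  unfolding z2_def[abs_def]
  apply (rule derivative_eq_intros dS ds df dg refl)+
  using energy[of x] unfolding q_def y2_def s_def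
  apply (simp add: numeral_3_eq_3 numeral_2_eq_2 del: One_nat_def)
  by algebra

end


context sol begin

lemma y2_per: "y2 (x + P) = y2 x + AA * g x"
  unfolding y2_def Sper fper gper AA_def by (simp add: algebra_simps)

lemma y2_0: "y2 0 = 0" unfolding y2_def by (simp add: S0 f0)

lemma z2_0: "z2 0 = g 0 * (2 - 4 * (g 0)^2)"
  unfolding z2_def s_def by (simp add: S0 f0 algebra_simps)

lemma z2_0_ne: "z2 0 \<noteq> 0"
  using g0 g02 unfolding z2_0 by auto

lemma y2_odd: "y2 (- x) = - y2 x"
  unfolding y2_def by (simp add: geven Sodd fodd)

lemma gnP: "g (real n * P) = g 0" by (rule per_nat[of g n, OF gper])

lemma y2_nP: "y2 (real n * P) = real n * AA * g 0"
proof (induction n)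
  case 0 thus ?case by (simp add: y2_0)
next
  case (Suc n)
  have "y2 (real (Suc n) * P) = y2 (real n * P + P)" by (simp add: algebra_simps)
  also have "\<dots> = y2 (real n * P) + AA * g 0" by (simp add: y2_per gnP)
  finally show ?case using Suc by (simp add: algebra_simps)
qed

lemma p1core:
  assumes du: "\<And>x. (u has_real_derivative u1 x) (at x)"
    and du1: "\<And>x. (u1 has_real_derivative q x * u x) (at x)"
    and bnd: "\<And>n::nat. \<bar>u (real n * P)\<bar> \<le> B"
  shows "u x = (u 0 / g 0) * g x"
proof -
  define a where "a = u 0 / g 0"
  define v where "v x = u x - a * g x" for x
  define v1 where "v1 x = u1 x - a * ((f x)^3 - f x)" for x
  have dv: "(v has_real_derivative v1 t) (at t)" for t
    unfolding v_def[abs_def] v1_def by (intro DERIV_diff du DERIV_cmult dg)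
  have dv1: "(v1 has_real_derivative q t * v t) (at t)" for t
    unfolding v1_def[abs_def] v_def
    by (rule DERIV_cong[OF DERIV_diff[OF du1 DERIV_cmult[OF dcub]]]) (simp add: algebra_simps)
  define b where "b = v1 0 / z2 0"
  define r where "r x = v x - b * y2 x" for x
  define r1 where "r1 x = v1 x - b * z2 x" for x
  have e1: "(r has_real_derivative r1 x) (at x)" for x
    unfolding r_def[abs_def] r1_def by (intro DERIV_diff dv DERIV_cmult dy2)
  have e2: "(r1 has_real_derivative q x * r x) (at x)" for x
    unfolding r1_def[abs_def] r_def
    by (rule DERIV_cong[OF DERIV_diff[OF dv1 DERIV_cmult[OF dz2]]]) (simp add: algebra_simps)
  have e3: "r 0 = 0" unfolding r_def v_def a_def using g0 by (simp add: y2_0)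
  have e4: "r1 0 = 0" unfolding r1_def b_def using z2_0_ne by simp
  have r0: "r t = 0" for t by (rule uniq[OF e1 e2 e3 e4])
  have vb: "v t = b * y2 t" for t using r0[of t] unfolding r_def by simp
  have "b = 0"
  proof (rule ccontr)
    assume "b \<noteq> 0"
    have pos: "\<bar>b * AA * g 0\<bar> > 0" using \<open>b \<noteq> 0\<close> AA_neg g0 by auto
    obtain n :: nat where n: "B + \<bar>a * g 0\<bar> < real n * \<bar>b * AA * g 0\<bar>"
      using ex_less_of_nat_mult[OF pos] by blast
    have "v (real n * P) = u (real n * P) - a * g 0" unfolding v_def by (simp add: gnP)
    hence "\<bar>v (real n * P)\<bar> \<le> B + \<bar>a * g 0\<bar>" using bnd[of n] by linarith
    moreover have "\<bar>v (real n * P)\<bar> = real n * \<bar>b * AA * g 0\<bar>"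
      using vb[of "real n * P"] by (simp add: y2_nP abs_mult)
    ultimately show False using n by linarith
  qed
  hence "v x = 0" using vb by simp
  thus ?thesis unfolding v_def a_def by simp
qed

lemma extr:
  assumes "LEq f u v" and vc: "continuous_on UNIV v"
  shows "\<exists>u1. (\<forall>x. (u has_real_derivative u1 x) (at x)) \<and>
               (\<forall>x. (u1 has_real_derivative q x * u x - v x) (at x))"
proof -
  obtain w where w: "H2loc_with u w" and ae: "AE x in lborel. - w x + (3 * (f x)^2 - 1) * u x = v x"
    using assms(1) unfolding LEq_def by blast
  obtain u1 where du: "\<forall>x. (u has_real_derivative u1 x) (at x)"
    and int: "\<forall>a b. a \<le> b \<longrightarrow> (w has_integral (u1 b - u1 a)) {a..b}"
    using w unfolding H2loc_with_def by blast
  have ae2: "AE x in lborel. w x = q x * u x - v x"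
    using ae by eventually_elim (auto simp: q_def)
  have uc: "continuous_on UNIV u"
    using du by (meson DERIV_continuous continuous_at_imp_continuous_on)
  have hc: "continuous_on UNIV (\<lambda>x. q x * u x - v x)"
    unfolding q_def by (intro continuous_intros fcont uc vc)
  have "\<forall>x. (u1 has_real_derivative q x * u x - v x) (at x)"
    using reg[OF _ ae2 hc] int by blast
  thus ?thesis using du by blast
qed

definition phi where "phi x = f x / 2 + x * g x / 2"
definition phi1 where "phi1 x = g x + x * ((f x)^3 - f x) / 2"
definition cc where "cc = P / (2 * AA)"
definition UU where "UU x = phi x - cc * y2 x"
definition UU1 where "UU1 x = phi1 x - cc * z2 x"

lemma dphi: "(phi has_real_derivative phi1 x) (at x)"
  unfolding phi_def[abs_def] phi1_def
  by (rule DERIV_cong[OF DERIV_add[OF DERIV_cdivide[OF df] DERIV_cdivide[OF DERIV_mult[OF DERIV_ident dg]]]])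
     (simp add: field_simps)

lemma dphi1: "(phi1 has_real_derivative q x * phi x - f x) (at x)"
proof -
  have "((\<lambda>x. x * ((f x)^3 - f x)) has_real_derivative 1 * ((f x)^3 - f x) + q x * g x * x) (at x)"
    by (rule DERIV_mult[OF DERIV_ident dcub])
  from DERIV_add[OF dg DERIV_cdivide[OF this, of 2]]
  show ?thesis unfolding phi1_def[abs_def]
    by (rule DERIV_cong) (simp add: phi_def q_def field_simps power3_eq_cube power2_eq_square)
qed

lemma dUU: "(UU has_real_derivative UU1 x) (at x)"
  unfolding UU_def[abs_def] UU1_def by (intro DERIV_diff dphi DERIV_cmult dy2)

lemma dUU1: "(UU1 has_real_derivative q x * UU x - f x) (at x)"
  unfolding UU1_def[abs_def] UU_def
  by (rule DERIV_cong[OF DERIV_diff[OF dphi1 DERIV_cmult[OF dz2]]]) (simp add: algebra_simps)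

lemma UU_odd: "UU (- x) = - UU x"
  unfolding UU_def phi_def by (simp add: y2_odd fodd geven)

lemma UU_per: "UU (x + P) = UU x"
proof -
  have "phi (x + P) = phi x + P * g x / 2" unfolding phi_def fper gper by (simp add: algebra_simps)
  moreover have "cc * AA = P / 2" unfolding cc_def using AA_neg by simp
  ultimately show ?thesis unfolding UU_def y2_per by (simp add: algebra_simps)
qed

lemma UU_LEq: "LEq f UU f"
proof -
  define w where "w x = q x * UU x - f x" for x
  have Uc: "continuous_on S UU" for S
    using dUU by (meson DERIV_continuous continuous_at_imp_continuous_on)
  have wc: "continuous_on S w" for S unfolding w_def q_def by (intro continuous_intros fcont Uc)
  have "H2loc_with UU w"
    unfolding H2loc_with_def
  proof (intro exI conjI allI impI)
    show "(UU has_real_derivative UU1 x) (at x)" for x by (rule dUU)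
    fix a b :: real assume "a \<le> b"
    show "(w has_integral (UU1 b - UU1 a)) {a..b}"
    proof (rule fundamental_theorem_of_calculus[OF \<open>a \<le> b\<close>])
      fix x assume "x \<in> {a..b}"
      show "(UU1 has_vector_derivative w x) (at x within {a..b})"
        using dUU1[of x] unfolding w_def has_real_derivative_iff_has_vector_derivative
        by (rule has_vector_derivative_at_within)
    qed
    show "(\<lambda>t. (w t)^2) integrable_on {a..b}"
      by (intro integrable_continuous_interval continuous_intros wc)
  qed
  moreover have "AE x in lborel. - w x + (3 * (f x)^2 - 1) * UU x = f x"
    by (rule AE_I2) (simp add: w_def q_def)
  ultimately show ?thesis unfolding LEq_def by blast
qed

lemma part2: "\<exists>!U. (\<forall>x. U (- x) = - U x) \<and> (\<forall>x. U (x + P) = U x) \<and> LEq f U f"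
proof (rule ex1I[of _ UU])
  show "(\<forall>x. UU (- x) = - UU x) \<and> (\<forall>x. UU (x + P) = UU x) \<and> LEq f UU f"
    using UU_odd UU_per UU_LEq by blast
next
  fix V assume V: "(\<forall>x. V (- x) = - V x) \<and> (\<forall>x. V (x + P) = V x) \<and> LEq f V f"
  have fc: "continuous_on UNIV f" by (rule fcont)
  obtain V1 where dV: "\<And>x. (V has_real_derivative V1 x) (at x)"
    and dV1: "\<And>x. (V1 has_real_derivative q x * V x - f x) (at x)"
    using extr[OF _ fc] V by blast
  define D where "D x = V x - UU x" for x
  define D1 where "D1 x = V1 x - UU1 x" for x
  have "V 0 = 0" using V[THEN conjunct1, rule_format, of 0] by simp
  moreover have "UU 0 = 0" using UU_odd[of 0] by simp
  ultimately have D0: "D 0 = 0" unfolding D_def by simp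
  have Dper: "D (x + P) = D x" for x using V UU_per unfolding D_def by simp
  have "D x = (D 0 / g 0) * g x" for x
  proof (rule p1core[where B=0 and ?u1.0=D1])
    show "(D has_real_derivative D1 x) (at x)" for x
      unfolding D_def[abs_def] D1_def by (intro DERIV_diff dV dUU)
    show "(D1 has_real_derivative q x * D x) (at x)" for x
      unfolding D1_def[abs_def] D_def
      by (rule DERIV_cong[OF DERIV_diff[OF dV1 dUU1]]) (simp add: algebra_simps)
    show "\<bar>D (real n * P)\<bar> \<le> 0" for n using per_nat[of D n] Dper D0 by simp
  qed
  thus "V = UU" using D0 unfolding D_def by (auto simp: fun_eq_iff)
qed

lemma part1: "bounded (range u) \<Longrightarrow> LEq f u (\<lambda>_. 0) \<Longrightarrow> \<exists>C. \<forall>x. u x = C * g x"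
proof -
  assume b: "bounded (range u)" and L: "LEq f u (\<lambda>_. 0)"
  obtain B where B: "\<And>x. \<bar>u x\<bar> \<le> B" using b unfolding bounded_iff by auto
  obtain u1 where du: "\<And>x. (u has_real_derivative u1 x) (at x)"
    and du1: "\<And>x. (u1 has_real_derivative q x * u x - 0) (at x)"
    using extr[OF L] by auto
  have "u x = (u 0 / g 0) * g x" for x
    by (rule p1core[where B=B and ?u1.0=u1]) (use du du1 B in auto)
  thus ?thesis by blast
qed

end


definition gg :: "real \<Rightarrow> real \<Rightarrow> real" where
  "gg E x = sqrt (1 - E) * sqrt ((1 + E) / 2) *
     (cos (jam (x * sqrt ((1 + E) / 2)) (modk E)) * dn (modk E) (x * sqrt ((1 + E) / 2)))"

context fixes E :: real assumes E0: "0 < E" and E1: "E < 1"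
begin

lemma modk2E: "(modk E)^2 = (1 - E) / (1 + E)"
  unfolding modk_def using E0 E1 by simp

lemma modk2: "(modk E)^2 < 1"
  unfolding modk2E using E0 E1 by (simp add: field_simps)

lemma f_deriv: "(u0 E has_real_derivative gg E x) (at x)"
proof -
  have "((\<lambda>x. sqrt (1 - E) * sin (jam (x * sqrt ((1 + E) / 2)) (modk E))) has_real_derivative
     sqrt (1 - E) * (cos (jam (x * sqrt ((1 + E) / 2)) (modk E)) * dn (modk E) (x * sqrt ((1 + E) / 2))
        * sqrt ((1 + E) / 2))) (at x)"
    by (intro DERIV_cmult DERIV_chain2[OF sn_deriv[OF modk2]] derivative_eq_intros) auto
  thus ?thesis unfolding u0_def[abs_def] jsn_def gg_def by (simp add: algebra_simps)
qed

lemma g_deriv: "(gg E has_real_derivative (u0 E x)^3 - u0 E x) (at x)"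
proof -
  let ?A = "sqrt (1 - E)" and ?c = "sqrt ((1 + E) / 2)" and ?k = "modk E"
  let ?s = "sin (jam (x * ?c) ?k)"
  have "(gg E has_real_derivative ?A * ?c * ((-(1 + ?k^2) * ?s + 2 * ?k^2 * ?s^3) * ?c)) (at x)"
    unfolding gg_def[abs_def]
    by (intro DERIV_cmult DERIV_chain2[OF cd_deriv[OF modk2]] derivative_eq_intros) (auto)?
  moreover
  have h1: "?c * ?c * (1 + ?k^2) = 1" using E0 E1 by (simp add: modk2E field_simps)
  have h2: "2 * ?c * ?c * ?k^2 = ?A * ?A" using E0 E1 by (simp add: modk2E field_simps)
  have "?A * ?c * ((-(1 + ?k^2) * ?s + 2 * ?k^2 * ?s^3) * ?c) = (?A * ?s)^3 - ?A * ?s"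
    using h1 h2 by algebra
  ultimately show ?thesis unfolding u0_def jsn_def by simp
qed

lemma f_odd: "u0 E (- x) = - u0 E x"
  unfolding u0_def jsn_def using jam_odd[OF modk2] by simp

definition PP :: real where "PP = 2 * T0 E"

lemma PP_pos: "PP > 0"
  unfolding PP_def T0_def using ellK_pos[OF modk2] E0 E1 by simp

lemma f_per: "u0 E (x + PP) = u0 E x"
proof -
  let ?c = "sqrt ((1 + E) / 2)" and ?k = "modk E"
  have "sqrt (2 / (1 + E)) * ?c = 1"
    using E0 E1 by (simp add: real_sqrt_mult[symmetric])
  hence "(x + PP) * ?c = x * ?c + 2 * ellK ?k + 2 * ellK ?k"
    unfolding PP_def T0_def by (simp add: algebra_simps)
  moreover have "jam (x * ?c + 2 * ellK ?k + 2 * ellK ?k) ?k = jam (x * ?c) ?k + pi + pi"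
    using jam_shift[OF modk2] by presburger
  ultimately have "jam ((x + PP) * ?c) ?k = jam (x * ?c) ?k + pi + pi" by simp
  thus ?thesis unfolding u0_def jsn_def by (simp add: sin_add)
qed

lemma f_sq: "(u0 E x)^2 < 1"
proof -
  have "(sin (jam (x * sqrt ((1 + E) / 2)) (modk E)))^2 \<le> 1" by (simp add: abs_square_le_1)
  hence "(u0 E x)^2 \<le> 1 - E" unfolding u0_def jsn_def using E1
    by (simp add: power_mult_distrib mult_left_le)
  thus ?thesis using E0 by linarith
qed

lemma gg0sq: "(gg E 0)^2 = (1 - E) * (1 + E) / 2"
  unfolding gg_def using E0 E1 jam0[OF modk2]
  by (simp add: dn_def[OF modk2] power_mult_distrib)

lemma gg0_ne: "gg E 0 \<noteq> 0" and gg0_ne2: "(gg E 0)^2 \<noteq> 1/2"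
proof -
  have "(1 - E) * (1 + E) / 2 > 0" using E0 E1 by simp
  thus "gg E 0 \<noteq> 0" using gg0sq by (metis power_zero_numeral less_irrefl)
  have "(1 - E) * (1 + E) / 2 \<noteq> 1/2" using E0 E1 by (simp add: field_simps)
  thus "(gg E 0)^2 \<noteq> 1/2" using gg0sq by simp
qed

end

theorem lemma5p1:
  fixes E :: real
  assumes "0 < E" and "E < 1"
  shows "(\<forall>u. bounded (range u) \<and> Lplus_eq E u (\<lambda>_. 0)
            \<longrightarrow> (\<exists>C. \<forall>x. u x = C * deriv (u0 E) x))
         \<and> (\<exists>!U. (\<forall>x. U (- x) = - U x) \<and> (\<forall>x. U (x + 2 * T0 E) = U x)
                 \<and> Lplus_eq E U (u0 E))"
proof -
  interpret sol "u0 E" "gg E" "PP E"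
    by unfold_locales
      (use f_deriv[OF assms] g_deriv[OF assms] f_odd[OF assms] f_per[OF assms] f_sq[OF assms]
           gg0_ne[OF assms] gg0_ne2[OF assms] PP_pos[OF assms] in auto)
  have L: "Lplus_eq E u v = LEq (u0 E) u v" for u v by (simp add: Lplus_eq_def LEq_def)
  have pp: "PP E = 2 * T0 E" using assms by (simp add: PP_def)
  have dv: "deriv (u0 E) x = gg E x" for x by (rule DERIV_imp_deriv[OF f_deriv[OF assms]])
  have "\<forall>u. bounded (range u) \<and> Lplus_eq E u (\<lambda>_. 0) \<longrightarrow> (\<exists>C. \<forall>x. u x = C * deriv (u0 E) x)"
    using part1 by (simp add: L dv)
  moreover have "\<exists>!U. (\<forall>x. U (- x) = - U x) \<and> (\<forall>x. U (x + 2 * T0 E) = U x) \<and> Lplus_eq E U (u0 E)"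
    using part2 unfolding pp by (simp add: L)
  ultimately show ?thesis by blast
qed

end
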